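(* $\mathsf{AP}(R_4,R_2)=\mathsf{AP}(R_4,R_3)=\mathsf{\Omega(1)}$.
   Context: Tuples in $\{0,1\}^4$ are written as strings $abcd$. The relations $R_1,\dots,R_5\subseteq\{0,1\}^4$ are $R_1=\{0000,1000,0100,1100,1010,0110,1001,0101,0011,1011,0111,1111\}$, $R_2=\{0000,1000,0100,1100,1010,0101,0011,1111\}$, $R_3=\{0000,1100,1010,0101,0011,1011,0111,1111\}$, $R_4=\{0000,1100,1010,0101,0011,1111\}$, $R_5=\{0000,1100,1010,0110,1001,0101,0011,1111\}$. For $R,S\subseteq\{0,1\}^4$, a Boolean function $f\colon\{0,1\}^n\to\{0,1\}$ is analogy-preserving relative to $(R,S)$ if for all $\mathbf{a},\mathbf{b},\mathbf{c},\mathbf{d}\in\{0,1\}^n$ with $(a_i,b_i,c_i,d_i)\in R$ for every $i$ and such that $(f(\mathbf{a}),f(\mathbf{b}),f(\mathbf{c}),x)\in S$ for some $x\in\{0,1\}$, we have $(f(\mathbf{a}),f(\mathbf{b}),f(\mathbf{c}),f(\mathbf{d}))\in S$; $\mathsf{AP}(R,S)$ is the set of all such functions of all arities. $\mathsf{\Omega(1)}$ is the set of all Boolean functions (of all arities) that are constant, a projection, or the negation of a projection. *)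

theory Defs
  imports Main
begin

text \<open>A Boolean function of arity n is a pair (n, f) with f :: bool list \<Rightarrow> bool,
of which only the values on lists of length n matter.\<close>

type_synonym tup4 = "bool \<times> bool \<times> bool \<times> bool"

definition tp :: "nat \<Rightarrow> nat \<Rightarrow> nat \<Rightarrow> nat \<Rightarrow> tup4" where
  "tp a b c d = (a = 1, b = 1, c = 1, d = 1)"

definition R1 :: "tup4 set" where
  "R1 = {tp 0 0 0 0, tp 1 0 0 0, tp 0 1 0 0, tp 1 1 0 0, tp 1 0 1 0, tp 0 1 1 0,
         tp 1 0 0 1, tp 0 1 0 1, tp 0 0 1 1, tp 1 0 1 1, tp 0 1 1 1, tp 1 1 1 1}"

definition R2 :: "tup4 set" where
  "R2 = {tp 0 0 0 0, tp 1 0 0 0, tp 0 1 0 0, tp 1 1 0 0, tp 1 0 1 0, tp 0 1 0 1,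
         tp 0 0 1 1, tp 1 1 1 1}"

definition R3 :: "tup4 set" where
  "R3 = {tp 0 0 0 0, tp 1 1 0 0, tp 1 0 1 0, tp 0 1 0 1, tp 0 0 1 1, tp 1 0 1 1,
         tp 0 1 1 1, tp 1 1 1 1}"

definition R4 :: "tup4 set" where
  "R4 = {tp 0 0 0 0, tp 1 1 0 0, tp 1 0 1 0, tp 0 1 0 1, tp 0 0 1 1, tp 1 1 1 1}"

definition R5 :: "tup4 set" where
  "R5 = {tp 0 0 0 0, tp 1 1 0 0, tp 1 0 1 0, tp 0 1 1 0, tp 1 0 0 1, tp 0 1 0 1,
         tp 0 0 1 1, tp 1 1 1 1}"

definition AP :: "tup4 set \<Rightarrow> tup4 set \<Rightarrow> (nat \<times> (bool list \<Rightarrow> bool)) set" where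
  "AP R S = {(n, f). \<forall>a b c d. length a = n \<and> length b = n \<and> length c = n \<and> length d = n
      \<and> (\<forall>i<n. (a ! i, b ! i, c ! i, d ! i) \<in> R)
      \<and> (\<exists>x. (f a, f b, f c, x) \<in> S)
      \<longrightarrow> (f a, f b, f c, f d) \<in> S}"

definition Omega1 :: "(nat \<times> (bool list \<Rightarrow> bool)) set" where
  "Omega1 = {(n, f).
      (\<exists>v. \<forall>x. length x = n \<longrightarrow> f x = v)
    \<or> (\<exists>i<n. \<forall>x. length x = n \<longrightarrow> f x = x ! i)
    \<or> (\<exists>i<n. \<forall>x. length x = n \<longrightarrow> f x = (\<not> x ! i))}"

end

theory Submission
  imports Defs
begin

definition flip :: "nat \<Rightarrow> bool list \<Rightarrow> bool list" where
  "flip j z = z[j := (\<not> z!j)]"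

lemma flip_len[simp]: "length (flip j z) = length z"
  by (simp add: flip_def)

lemma flip_flip[simp]: "i < length z \<Longrightarrow> flip i (flip i z) = z"
  by (simp add: flip_def)

lemma flip_comm: "i \<noteq> j \<Longrightarrow> flip i (flip j z) = flip j (flip i z)"
  by (simp add: flip_def list_update_swap nth_list_update_neq)

lemma flip_nth: "flip j z ! k = (if k = j \<and> j < length z then \<not> z!k else z!k)"
  by (cases "j < length z") (auto simp add: flip_def nth_list_update list_update_beyond)

lemma mix:
  assumes inv: "\<And>z j. length z = n \<Longrightarrow> j < n \<Longrightarrow> j \<in> J \<Longrightarrow> g (flip j z) = g z"
    and lx: "length x = n" and ly: "length y = n"
    and agree: "\<And>j. j < n \<Longrightarrow> j \<notin> J \<Longrightarrow> x!j = y!j"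
  shows "g x = g y"
proof -
  define m where "m k = map (\<lambda>p. if p < k then y!p else x!p) [0..<n]" for k
  have lm: "length (m k) = n" for k by (simp add: m_def)
  have step: "k < n \<Longrightarrow> g (m (Suc k)) = g (m k)" for k
  proof -
    assume k: "k < n"
    show ?thesis
    proof (cases "x!k = y!k")
      case True
      have "m (Suc k) = m k"
        by (rule nth_equalityI) (auto simp: m_def lm True less_Suc_eq)
      then show ?thesis by simp
    next
      case False
      then have kJ: "k \<in> J" using agree k by blast
      have "m (Suc k) = flip k (m k)"
        by (rule nth_equalityI) (use False in \<open>auto simp: m_def lm flip_nth less_Suc_eq\<close>)
      then show ?thesis using inv[OF lm k kJ] by simp
    qed
  qed
  have "k \<le> n \<Longrightarrow> g (m k) = g x" for k
  proof (induction k)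
    case 0
    have "m 0 = x" by (rule nth_equalityI) (auto simp: m_def lx)
    then show ?case by simp
  next
    case (Suc k)
    then show ?case using step[of k] by simp
  qed
  moreover have "m n = y" by (rule nth_equalityI) (auto simp: m_def ly)
  ultimately show ?thesis by (metis order_refl)
qed

lemma R4_mem: "(a,b,c,d) \<in> R4 \<longleftrightarrow> ((a = b \<and> c = d) \<or> (a = c \<and> b = d))"
  unfolding R4_def tp_def by auto

lemma sq:
  assumes "(n,f) \<in> AP R4 S" "length x = n" "i<n" "j<n" "i\<noteq>j"
  shows "(\<exists>t. (f x, f (flip i x), f (flip j x), t) \<in> S) \<longrightarrow>
         (f x, f (flip i x), f (flip j x), f (flip j (flip i x))) \<in> S"
proof -
  have "\<forall>k<n. (x ! k, flip i x ! k, flip j x ! k, flip j (flip i x) ! k) \<in> R4"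
    using assms by (auto simp: flip_nth R4_mem)
  then show ?thesis using assms unfolding AP_def by auto
qed

lemma boolcase:
  fixes A B C D :: bool
  defines "cond S p \<equiv> (case p of (p1,p2,p3,p4) \<Rightarrow> (\<exists>t. (p1,p2,p3,t) \<in> S) \<longrightarrow> (p1,p2,p3,p4) \<in> S)"
  assumes "S = R2 \<or> S = R3"
   "cond S (A,B,C,D)" "cond S (A,C,B,D)" "cond S (B,A,D,C)" "cond S (B,D,A,C)"
   "cond S (C,D,A,B)" "cond S (C,A,D,B)" "cond S (D,C,B,A)" "cond S (D,B,C,A)"
  shows "(A,B,C,D) \<in> R4"
  using assms unfolding R2_def R3_def R4_def tp_def
  by (cases A; cases B; cases C; cases D) auto

lemma sq4:
  assumes ap: "(n,f) \<in> AP R4 S" and S: "S = R2 \<or> S = R3" and x: "length x = n"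
    and ij: "i<n" "j<n" "i\<noteq>j"
  shows "(f x, f (flip i x), f (flip j x), f (flip j (flip i x))) \<in> R4"
proof -
  have c: "\<And>y a b. length y = n \<Longrightarrow> a < n \<Longrightarrow> b < n \<Longrightarrow> a \<noteq> b \<Longrightarrow>
    (\<exists>t. (f y, f (flip a y), f (flip b y), t) \<in> S) \<longrightarrow>
         (f y, f (flip a y), f (flip b y), f (flip b (flip a y))) \<in> S"
    using sq[OF ap] by blast
  let ?x1 = "flip i x" and ?x2 = "flip j x" and ?x12 = "flip j (flip i x)"
  have com: "flip i ?x2 = ?x12" using ij flip_comm by blast
  have l1: "length ?x1 = n" "length ?x2 = n" "length ?x12 = n" using x by auto
  have e1: "flip i ?x1 = x" "flip j ?x2 = x" using x ij by auto
  have e2: "flip i ?x12 = ?x2" using x ij com[symmetric] by simp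
  have e3: "flip j ?x12 = ?x1" using x ij by simp
  have e4: "flip i (flip j ?x12) = x" using e3 e1 by simp
  have e5: "flip j (flip i ?x12) = x" using e2 e1 by simp
  have e6: "flip i (flip j ?x1) = ?x2" using e3 com e2 by (metis)
  have e7: "flip j (flip i ?x2) = ?x1" using com e3 by simp
  note C1 = c[OF x ij] c[OF x ij(2,1) ij(3)[symmetric]]
  note C2 = c[OF l1(1) ij] c[OF l1(1) ij(2,1) ij(3)[symmetric]]
  note C3 = c[OF l1(2) ij] c[OF l1(2) ij(2,1) ij(3)[symmetric]]
  note C4 = c[OF l1(3) ij] c[OF l1(3) ij(2,1) ij(3)[symmetric]]
  show ?thesis
    apply (rule boolcase[OF S])
    using C1 C2 C3 C4 unfolding e1 e2 e3 e4 e5 e6 e7 com split_conv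
    by simp_all
qed

lemma sub: assumes ap: "(n,f) \<in> AP R4 S" and S: "S = R2 \<or> S = R3"
  shows "(n,f) \<in> Omega1"
proof -
  define s where "s i x = (f (flip i x) \<noteq> f x)" for i x
  have sinv: "s i x = s i y" if "i < n" "length x = n" "length y = n" for i x y
  proof (rule mix[where J=UNIV and n=n])
    fix z :: "bool list" and j assume z: "length z = n" and j: "j < n"
    show "s i (flip j z) = s i z"
    proof (cases "i = j")
      case True then show ?thesis using z j by (auto simp: s_def)
    next
      case False
      have "(f z, f (flip i z), f (flip j z), f (flip j (flip i z))) \<in> R4"
        using sq4[OF ap S z \<open>i<n\<close> j False] .
      then show ?thesis using False by (auto simp: s_def R4_mem flip_comm)
    qed
  qed (use that in auto)
  have two: "False" if "i<n" "j<n" "i\<noteq>j" "s i z" "s j z" "length z = n" for i j z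
  proof -
    have "s j (flip i z)" using sinv[of j z "flip i z"] that by simp
    moreover have "(f z, f (flip i z), f (flip j z), f (flip j (flip i z))) \<in> R4"
      using sq4[OF ap S] that by blast
    ultimately show False using that by (auto simp: s_def R4_mem)
  qed
  define z0 where "z0 = replicate n False"
  have lz0: "length z0 = n" by (simp add: z0_def)
  show ?thesis
  proof (cases "\<exists>i<n. s i z0")
    case False
    have "f x = f z0" if "length x = n" for x
      by (rule mix[where J=UNIV and n=n])
        (use False sinv lz0 that in \<open>auto simp: s_def\<close>)
    then show ?thesis unfolding Omega1_def by auto
  next
    case True
    then obtain i where i: "i < n" "s i z0" by blast
    have fx: "f x = f (z0[i := x!i])" if lx: "length x = n" for x
    proof (rule mix[where J="{j. j \<noteq> i}" and n=n])
      fix z :: "bool list" and j assume z: "length z = n" "j < n" "j \<in> {j. j \<noteq> i}"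
      have "\<not> s j z"
      proof
        assume "s j z"
        moreover have "s i z" using sinv[OF i(1) lz0 z(1)] i by simp
        ultimately show False using two[of i j z] z i by auto
      qed
      then show "f (flip j z) = f z" by (simp add: s_def)
    qed (use lx lz0 i in auto)
    have fl: "z0[i := True] = flip i z0" using i lz0 by (simp add: flip_def z0_def)
    have fl0: "z0[i := False] = z0" using i lz0 by (simp add: z0_def list_update_same_conv)
    have "f x = (if f z0 then \<not> x!i else x!i)" if "length x = n" for x
      using fx[OF that] fl fl0 i(2) by (cases "x!i") (auto simp: s_def)
    then show ?thesis unfolding Omega1_def using i(1)
      by (cases "f z0") auto
  qed
qed

lemma sup: assumes "(n,f) \<in> Omega1" and S: "S = R2 \<or> S = R3"
  shows "(n,f) \<in> AP R4 S"
proof -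
  have R4S: "R4 \<subseteq> S" using S unfolding R2_def R3_def R4_def by auto
  have neg: "(a,b,c,d) \<in> R4 \<Longrightarrow> (\<not>a,\<not>b,\<not>c,\<not>d) \<in> R4" for a b c d
    by (auto simp: R4_mem)
  have cst: "(v,v,v,v) \<in> S" for v using S unfolding R2_def R3_def tp_def by (cases v) auto
  show ?thesis
    using assms(1) unfolding Omega1_def AP_def
  proof (clarsimp)
    fix a b c d
    assume H: "(\<exists>v. \<forall>x. length x = length a \<longrightarrow> f x = v) \<or>
           (\<exists>i<length a. \<forall>x. length x = length a \<longrightarrow> f x = x ! i) \<or>
           (\<exists>i<length a. \<forall>x. length x = length a \<longrightarrow> f x = (\<not> x ! i))"
      and l: "n = length a" "length b = length a" "length c = length a" "length d = length a"
      and R: "\<forall>i<length a. (a ! i, b ! i, c ! i, d ! i) \<in> R4"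
    show "(f a, f b, f c, f d) \<in> S"
      using H
    proof (elim disjE exE conjE)
      fix v assume "\<forall>x. length x = length a \<longrightarrow> f x = v"
      then show ?thesis using l cst by auto
    next
      fix i assume "i < length a" "\<forall>x. length x = length a \<longrightarrow> f x = x ! i"
      then show ?thesis using l R R4S by auto
    next
      fix i assume "i < length a" "\<forall>x. length x = length a \<longrightarrow> f x = (\<not> x ! i)"
      then show ?thesis using l R R4S neg by auto
    qed
  qed
qed

theorem mainTheorem15:
  shows "AP R4 R2 = Omega1 \<and> AP R4 R3 = Omega1"
  using sub sup by auto

end
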